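(* Let $d$ be a sufficiently large integer and let $X,Y\subset\mathbb{R}^d$ be finite sets with $|Y|=C|X|$, where $C\leq\log|X|$, and such that the affine hull of $X+Y=\{x+y:x\in X,y\in Y\}$ has dimension $d$. Define $K$ by $|X|+|Y|=K(d+2)$. If $K\leq\log|X|$, then $$|X+Y|\geq\frac{|X||Y|}{2^{10}\log^2|X|}.$$ *)

theory Defs
  imports "HOL-Analysis.Analysis" "HOL-Library.Function_Algebras"
begin

text \<open>Points of R^d are represented as functions nat => real vanishing at all
  coordinates i >= d.  To use the library notions affine hull and affine
  dependence, the function space is made a real vector space pointwise.\<close>

instantiation "fun" :: (type, real_vector) real_vector
begin
definition scaleR_fun :: "real \<Rightarrow> ('a \<Rightarrow> 'b) \<Rightarrow> 'a \<Rightarrow> 'b"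
  where "scaleR_fun r f = (\<lambda>x. r *\<^sub>R f x)"
instance
  by standard (auto simp: scaleR_fun_def fun_eq_iff scaleR_add_right scaleR_add_left plus_fun_def)
end

definition Rd :: "nat \<Rightarrow> (nat \<Rightarrow> real) set" where
  "Rd d = {x. \<forall>i\<ge>d. x i = 0}"

text \<open>Affine dimension, defined literally as in the library (HOL-Analysis aff_dim),
  but for an arbitrary real vector space.\<close>
definition gen_aff_dim :: "('a::real_vector) set \<Rightarrow> int" where
  "gen_aff_dim V =
  (SOME d :: int.
    \<exists>B. affine hull B = affine hull V \<and> \<not> affine_dependent B \<and> of_nat (card B) = d + 1)"

definition sumset :: "('a::plus) set \<Rightarrow> 'a set \<Rightarrow> 'a set" where
  "sumset X Y = {x + y | x y. x \<in> X \<and> y \<in> Y}"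

end

theory Submission
  imports Defs
begin


lemma indep_notin_span:
  fixes B :: "'a::real_vector set"
  assumes "independent B" "u \<in> B"
  shows "u \<notin> span (B - {u})"
  using assms by (meson dependent_def)

lemma inj_pair:
  fixes P Q :: "'a::real_vector set"
  assumes ind: "independent (P \<union> Q)" and disj: "P \<inter> Q = {}"
    and u: "u \<in> insert 0 P" and u': "u' \<in> insert 0 P"
    and v: "v \<in> insert 0 Q" and v': "v' \<in> insert 0 Q"
    and eq: "u + v = u' + v'"
  shows "u = u' \<and> v = v'"
proof -
  have z: "0 \<notin> P \<union> Q" using ind dependent_zero by blast
  have uu: "u = u'"
  proof (rule ccontr)
    assume ne: "u \<noteq> u'"
    have gen: "w \<notin> span ((P \<union> Q) - {w})" if "w \<in> P" for w
      using indep_notin_span[OF ind] that by blast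
    show False
    proof (cases "u = 0")
      case True
      then have "u' \<in> P" using ne u' by auto
      moreover have "u' = v - v'" using eq True by (simp add: algebra_simps)
      moreover have "v - v' \<in> span ((P \<union> Q) - {u'})"
        using v v' \<open>u' \<in> P\<close> disj
        by (intro span_diff) (auto intro: span_base span_zero)
      ultimately show False using gen by auto
    next
      case False
      then have "u \<in> P" using u by auto
      moreover have "u = u' + v' - v" using eq by (simp add: algebra_simps)
      moreover have "u' + v' - v \<in> span ((P \<union> Q) - {u})"
        using v v' u' ne \<open>u \<in> P\<close> disj
        by (intro span_diff span_add) (auto intro: span_base span_zero)
      ultimately show False using gen by auto
    qed
  qed
  then show ?thesis using eq by simp
qed

lemma inj_full:
  fixes P Q :: "'a::real_vector set"
  assumes ind: "independent (P \<union> Q)" and disj: "P \<inter> Q = {}"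
    and u: "u \<in> span P" and u': "u' \<in> span P"
    and v: "v \<in> insert 0 Q" and v': "v' \<in> insert 0 Q"
    and eq: "u + v = u' + v'"
  shows "u = u' \<and> v = v'"
proof -
  have vv: "v = v'"
  proof (rule ccontr)
    assume ne: "v \<noteq> v'"
    have gen: "w \<notin> span ((P \<union> Q) - {w})" if "w \<in> Q" for w
      using indep_notin_span[OF ind] that by blast
    have sp: "span P \<subseteq> span ((P \<union> Q) - {w})" if "w \<in> Q" for w
      using disj that by (intro span_mono) auto
    show False
    proof (cases "v = 0")
      case True
      then have "v' \<in> Q" using ne v' by auto
      moreover have "v' = u - u'" using eq True by (simp add: algebra_simps)
      moreover have "u - u' \<in> span ((P \<union> Q) - {v'})"
        using sp[OF \<open>v' \<in> Q\<close>] u u' by (intro span_diff) auto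
      ultimately show False using gen by auto
    next
      case False
      then have "v \<in> Q" using v by auto
      moreover have "v = u' - u + v'" using eq by (simp add: algebra_simps)
      moreover have "u' - u + v' \<in> span ((P \<union> Q) - {v})"
        using sp[OF \<open>v \<in> Q\<close>] u u' v' ne
        by (intro span_diff span_add) (auto intro: span_base span_zero)
      ultimately show False using gen by auto
    qed
  qed
  then show ?thesis using eq by simp
qed

lemma card_prod_le:
  assumes "finite S" "f ` (A \<times> B) \<subseteq> S" "inj_on f (A \<times> B)" "finite A" "finite B"
  shows "card A * card B \<le> card S"
proof -
  have "card (f ` (A \<times> B)) = card A * card B"
    using assms by (simp add: card_image card_cartesian_product)
  then show ?thesis using assms card_mono by metis
qed

lemma sumset_comm: "sumset X Y = sumset Y (X::'a::ab_semigroup_add set)"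
  unfolding sumset_def by (auto; metis add.commute)

lemma I1:
  fixes X Y :: "'a::real_vector set"
  assumes fin: "finite X" "finite Y" and x0: "x0 \<in> X" and y0: "y0 \<in> Y"
    and P: "P \<subseteq> (\<lambda>x. x - x0) ` X" and Q: "Q \<subseteq> (\<lambda>y. y - y0) ` Y"
    and ind: "independent (P \<union> Q)" and disj: "P \<inter> Q = {}"
  shows "(card P + 1) * (card Q + 1) \<le> card (sumset X Y)"
proof -
  have fP: "finite P" using P fin finite_subset by blast
  have fQ: "finite Q" using Q fin finite_subset by blast
  have z: "0 \<notin> P \<union> Q" using ind dependent_zero by blast
  let ?f = "\<lambda>(u,v). (x0 + u) + (y0 + v)"
  have "card (insert 0 P) * card (insert 0 Q) \<le> card (sumset X Y)"
  proof (rule card_prod_le)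
    show "finite (sumset X Y)" unfolding sumset_def using fin
      by (simp add: finite_image_set2)
    show "?f ` (insert 0 P \<times> insert 0 Q) \<subseteq> sumset X Y"
    proof (rule image_subsetI)
      fix p assume "p \<in> insert 0 P \<times> insert 0 Q"
      then obtain u v where p: "p = (u,v)" "u \<in> insert 0 P" "v \<in> insert 0 Q" by auto
      then have "x0 + u \<in> X" "y0 + v \<in> Y" using P Q x0 y0 by auto
      then show "?f p \<in> sumset X Y" unfolding sumset_def p by auto
    qed
    show "inj_on ?f (insert 0 P \<times> insert 0 Q)"
    proof (rule inj_onI)
      fix p q assume hp: "p \<in> insert 0 P \<times> insert 0 Q" "q \<in> insert 0 P \<times> insert 0 Q" "?f p = ?f q"
      then obtain u v u' v' where h: "p = (u,v)" "q = (u',v')" "u \<in> insert 0 P" "v \<in> insert 0 Q" "u' \<in> insert 0 P" "v' \<in> insert 0 Q"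
        by auto
      then have "u + v = u' + v'" using hp(3) by (simp add: algebra_simps)
      then show "p = q" using inj_pair[OF ind disj] h by blast
    qed
  qed (use fP fQ in auto)
  then show ?thesis using z fP fQ by simp
qed

lemma I2:
  fixes X Y :: "'a::real_vector set"
  assumes fin: "finite X" "finite Y" and x0: "x0 \<in> X" and y0: "y0 \<in> Y"
    and P: "(\<lambda>x. x - x0) ` X \<subseteq> span P" and Q: "Q \<subseteq> (\<lambda>y. y - y0) ` Y"
    and ind: "independent (P \<union> Q)" and disj: "P \<inter> Q = {}"
  shows "card X * (card Q + 1) \<le> card (sumset X Y)"
proof -
  have fQ: "finite Q" using Q fin finite_subset by blast
  have z: "0 \<notin> P \<union> Q" using ind dependent_zero by blast
  let ?f = "\<lambda>(x,v). x + (y0 + v)"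
  have "card X * card (insert 0 Q) \<le> card (sumset X Y)"
  proof (rule card_prod_le)
    show "finite (sumset X Y)" unfolding sumset_def using fin
      by (simp add: finite_image_set2)
    show "?f ` (X \<times> insert 0 Q) \<subseteq> sumset X Y"
    proof (rule image_subsetI)
      fix p assume "p \<in> X \<times> insert 0 Q"
      then obtain x v where p: "p = (x,v)" "x \<in> X" "v \<in> insert 0 Q" by auto
      then have "y0 + v \<in> Y" using Q y0 by auto
      then show "?f p \<in> sumset X Y" unfolding sumset_def p using p by auto
    qed
    show "inj_on ?f (X \<times> insert 0 Q)"
    proof (rule inj_onI)
      fix p q assume hp: "p \<in> X \<times> insert 0 Q" "q \<in> X \<times> insert 0 Q" "?f p = ?f q"
      then obtain x v x' v' where h: "p = (x,v)" "q = (x',v')" "x \<in> X" "v \<in> insert 0 Q" "x' \<in> X" "v' \<in> insert 0 Q"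
        by auto
      then have "(x - x0) + v = (x' - x0) + v'" using hp(3) by (simp add: algebra_simps)
      moreover have "x - x0 \<in> span P" "x' - x0 \<in> span P" using P h by auto
      ultimately have "x - x0 = x' - x0 \<and> v = v'" using inj_full[OF ind disj] h by blast
      then show "p = q" using h by simp
    qed
  qed (use fin fQ in auto)
  then show ?thesis using z fQ by simp
qed

lemma E:
  fixes X Y :: "'a::real_vector set"
  assumes P: "P \<subseteq> (\<lambda>x. x - x0) ` X" and ind: "independent P"
  obtains Q where "Q \<subseteq> (\<lambda>y. y - y0) ` Y" "independent (P \<union> Q)" "P \<inter> Q = {}"
    "(\<lambda>y. y - y0) ` Y \<subseteq> span (P \<union> Q)"
proof -
  obtain B where B: "P \<subseteq> B" "B \<subseteq> P \<union> (\<lambda>y. y - y0) ` Y" "independent B"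
    "P \<union> (\<lambda>y. y - y0) ` Y \<subseteq> span B"
    using maximal_independent_subset_extend[of P "P \<union> (\<lambda>y. y - y0) ` Y"] ind by blast
  have "P \<union> (B - P) = B" using B by auto
  then show ?thesis using B by (intro that[of "B - P"]) auto
qed



lemma DIM:
  fixes X Y :: "'a::real_vector set"
  assumes "gen_aff_dim (sumset X Y) = int d"
  obtains x0 y0 D where "x0 \<in> X" "y0 \<in> Y" "independent D" "card D = d"
    "D \<subseteq> span ((\<lambda>x. x - x0) ` X \<union> (\<lambda>y. y - y0) ` Y)"
    "(\<lambda>x. x - x0) ` X \<union> (\<lambda>y. y - y0) ` Y \<subseteq> span D" "finite D"
proof -
  let ?S = "sumset X Y"
  have ex: "\<exists>dd::int. \<exists>B. affine hull B = affine hull ?S \<and> \<not> affine_dependent B \<and> of_nat (card B) = dd + 1"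
  proof -
    obtain B where "\<not> affine_dependent B" "affine hull ?S = affine hull B"
      using affine_basis_exists[of ?S] by blast
    then show ?thesis by (intro exI[of _ "int (card B) - 1"] exI[of _ B]) auto
  qed
  have "\<exists>B. affine hull B = affine hull ?S \<and> \<not> affine_dependent B \<and> int (card B) = gen_aff_dim ?S + 1"
    unfolding gen_aff_dim_def by (rule someI_ex[OF ex])
  then obtain B where B: "affine hull B = affine hull ?S" "\<not> affine_dependent B" "int (card B) = gen_aff_dim ?S + 1"
    by blast
  note B = B(1,2) B(3)[unfolded assms]
  have cB: "card B = d + 1" using B(3) by simp
  have "card B > 0" using cB by simp
  then have "finite B" by (rule card_ge_0_finite)
  have "B \<noteq> {}" using cB by auto
  then obtain b0 where b0: "b0 \<in> B" by auto
  have "b0 \<in> affine hull B" using b0 by (rule hull_inc)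
  then have b0S: "b0 \<in> affine hull ?S" using B(1) by simp
  then have "?S \<noteq> {}" by (metis affine_hull_empty empty_iff)
  then obtain x0 y0 where x0: "x0 \<in> X" and y0: "y0 \<in> Y" unfolding sumset_def by blast
  let ?s0 = "x0 + y0"
  let ?W = "(\<lambda>x. x - x0) ` X \<union> (\<lambda>y. y - y0) ` Y"
  have "?s0 \<in> ?S" using x0 y0 unfolding sumset_def by blast
  then have s0: "?s0 \<in> affine hull ?S" by (rule hull_inc)
  have ah: "affine hull ?S = (\<lambda>x. ?s0 + x) ` span ((\<lambda>x. - ?s0 + x) ` ?S)"
    by (rule affine_hull_span_gen[OF s0])
  have sub: "(\<lambda>x. - ?s0 + x) ` ?S \<subseteq> span ?W"
  proof
    fix z assume "z \<in> (\<lambda>x. - ?s0 + x) ` ?S"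
    then obtain x y where xy: "x \<in> X" "y \<in> Y" "z = - (x0 + y0) + (x + y)"
      unfolding sumset_def by blast
    then have "z = (x - x0) + (y - y0)" by (simp add: algebra_simps)
    moreover have "x - x0 \<in> span ?W" "y - y0 \<in> span ?W" using xy by (auto intro: span_base)
    ultimately show "z \<in> span ?W" by (simp add: span_add)
  qed
  have spsub: "span ((\<lambda>x. - ?s0 + x) ` ?S) \<subseteq> span ?W"
    using sub by (simp add: span_minimal subspace_span)
  let ?D = "(\<lambda>x. - b0 + x) ` (B - {b0})"
  have indD: "independent ?D" using B(2) affine_dependent_iff_dependent2[OF b0] by simp
  have cD: "card ?D = d"
    using cB \<open>finite B\<close> b0 by (subst card_image) (auto simp: inj_on_def)
  have DW: "?D \<subseteq> span ?W"
  proof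
    fix z assume "z \<in> ?D"
    then obtain b where b: "b \<in> B" "z = - b0 + b" by auto
    have "b \<in> affine hull B" using b(1) by (rule hull_inc)
    then have "b \<in> affine hull ?S" using B(1) by simp
    then obtain v where v: "v \<in> span ((\<lambda>x. - ?s0 + x) ` ?S)" "b = ?s0 + v" using ah by auto
    obtain v0 where v0: "v0 \<in> span ((\<lambda>x. - ?s0 + x) ` ?S)" "b0 = ?s0 + v0" using ah b0S by auto
    have "z = v - v0" using b v v0 by (simp add: algebra_simps)
    moreover have "v - v0 \<in> span ((\<lambda>x. - ?s0 + x) ` ?S)" using v v0 by (simp add: span_diff)
    ultimately show "z \<in> span ?W" using spsub by auto
  qed
  have ahB: "affine hull B = (\<lambda>x. b0 + x) ` span ?D" by (rule affine_hull_span2[OF b0])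
  have inS: "p \<in> ?S \<Longrightarrow> \<exists>u. u \<in> span ?D \<and> p = b0 + u" for p
  proof -
    assume "p \<in> ?S"
    then have "p \<in> affine hull ?S" by (rule hull_inc)
    then have "p \<in> affine hull B" using B(1) by simp
    then show ?thesis using ahB by auto
  qed
  have dif: "p - p' \<in> span ?D" if hp: "p \<in> ?S" "p' \<in> ?S" for p p'
  proof -
    obtain u where u: "u \<in> span ?D" "p = b0 + u" using inS[OF hp(1)] by blast
    obtain u' where u': "u' \<in> span ?D" "p' = b0 + u'" using inS[OF hp(2)] by blast
    have "p - p' = u - u'" using u u' by simp
    then show ?thesis using u u' by (simp add: span_diff)
  qed
  have WD: "?W \<subseteq> span ?D"
  proof
    fix w assume "w \<in> ?W"
    then consider x where "x \<in> X" "w = x - x0" | y where "y \<in> Y" "w = y - y0" by blast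
    then show "w \<in> span ?D"
    proof cases
      case (1 x)
      have "x + y0 \<in> ?S" "x0 + y0 \<in> ?S" using 1 x0 y0 unfolding sumset_def by blast+
      then have "(x + y0) - (x0 + y0) \<in> span ?D" by (rule dif)
      then show ?thesis using 1 by simp
    next
      case (2 y)
      have "x0 + y \<in> ?S" "x0 + y0 \<in> ?S" using 2 x0 y0 unfolding sumset_def by blast+
      then have "(x0 + y) - (x0 + y0) \<in> span ?D" by (rule dif)
      then show ?thesis using 2 by simp
    qed
  qed
  have fD: "finite ?D" using \<open>finite B\<close> by simp
  show ?thesis using that[OF x0 y0 indD cD DW WD fD] .
qed



lemma ln_lb:
  assumes "n \<ge> (2::nat)" shows "1/512 \<le> ln (real n)"
proof -
  have "norm (exp (1/512::real)) \<le> 2" by (rule exp_bound_half) simp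
  then have "exp (1/512::real) \<le> real n" using assms by simp
  then show ?thesis using assms by (subst ln_ge_iff) auto
qed

lemma num:
  fixes n m s d a b q p :: nat and L :: real
  assumes n1: "n \<ge> 1" and L: "L = ln (real n)"
    and nm: "real n + real m \<le> (real d + 2) * L"
    and h1: "n * (q + 1) \<le> s" "d \<le> a + q"
    and h2: "m * (p + 1) \<le> s" "d \<le> b + p"
    and h3: "d < 2*a \<Longrightarrow> d < 2*b \<Longrightarrow> \<exists>q1. (b div 2 + 1) * (q1 + 1) \<le> s \<and> b \<le> b div 2 + q1"
  shows "real n * real m / (2^10 * L^2) \<le> real s"
proof (cases "n = 1")
  case True then show ?thesis using L by simp
next
  case False
  then have n2: "n \<ge> 2" using n1 by simp
  have L1: "1/512 \<le> L" using ln_lb[OF n2] L by simp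
  have Lp: "L > 0" using L1 by simp
  have nb: "real n \<le> (real d + 2) * L" "real m \<le> (real d + 2) * L" using nm by auto
  have goal: "real n * real m \<le> 1024 * L^2 * real s"
  proof -
    consider "2*a \<le> d" | "2*b \<le> d" | "d < 2*a" "d < 2*b" by linarith
    then show ?thesis
    proof cases
      case 1
      have "n * (d + 2) \<le> 2 * s"
      proof -
        have "d + 2 \<le> 2 * (q+1)" using 1 h1(2) by presburger
        then have "n * (d+2) \<le> n * (2 * (q+1))" by simp
        then show ?thesis using h1 by linarith
      qed
      then have A: "real n * (real d + 2) \<le> 2 * real s" by (metis of_nat_le_iff of_nat_mult of_nat_add of_nat_numeral)
      have "real n * real m \<le> real n * ((real d + 2) * L)" using nb by (simp add: mult_left_mono)
      also have "\<dots> = (real n * (real d + 2)) * L" by simp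
      also have "\<dots> \<le> (2 * real s) * L" using A Lp by (simp add: mult_right_mono)
      also have "\<dots> \<le> 1024 * L^2 * real s"
      proof -
        have "2 * L \<le> 1024 * L^2" using L1 Lp by (simp add: power2_eq_square)
        then show ?thesis using mult_right_mono[of "2*L" "1024 * L^2" "real s"] by (simp add: algebra_simps)
      qed
      finally show ?thesis .
    next
      case 2
      have "m * (d + 2) \<le> 2 * s"
      proof -
        have "d + 2 \<le> 2 * (p+1)" using 2 h2(2) by presburger
        then have "m * (d+2) \<le> m * (2 * (p+1))" by simp
        then show ?thesis using h2 by linarith
      qed
      then have A: "real m * (real d + 2) \<le> 2 * real s" by (metis of_nat_le_iff of_nat_mult of_nat_add of_nat_numeral)
      have "real n * real m \<le> ((real d + 2) * L) * real m" using nb by (simp add: mult_right_mono)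
      also have "\<dots> = (real m * (real d + 2)) * L" by simp
      also have "\<dots> \<le> (2 * real s) * L" using A Lp by (simp add: mult_right_mono)
      also have "\<dots> \<le> 1024 * L^2 * real s"
      proof -
        have "2 * L \<le> 1024 * L^2" using L1 Lp by (simp add: power2_eq_square)
        then show ?thesis using mult_right_mono[of "2*L" "1024 * L^2" "real s"] by (simp add: algebra_simps)
      qed
      finally show ?thesis .
    next
      case 3
      then obtain q1 where q1: "(b div 2 + 1) * (q1 + 1) \<le> s" "b \<le> b div 2 + q1" using h3 by blast
      define k where "k = b div 2"
      have kq: "k \<le> q1" using q1 k_def by linarith
      have k4: "d + 2 \<le> 4 * k + 4" using 3 k_def by linarith
      have "(k+1) * (k+1) \<le> (k+1) * (q1+1)" using kq by (intro mult_le_mono2) simp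
      then have "(k+1)*(k+1) \<le> s" using le_trans q1(1)[folded k_def] by blast
      then have st: "16 * ((k+1)*(k+1)) \<le> 16 * s" by simp
      have e: "(4*k+4)*(4*k+4) = 16 * ((k+1)*(k+1))" by (simp add: algebra_simps)
      have "(d+2)*(d+2) \<le> (4*k+4)*(4*k+4)" by (rule mult_le_mono[OF k4 k4])
      then have "(d+2)*(d+2) \<le> 16 * ((k+1)*(k+1))" using e by simp
      then have "(d+2)*(d+2) \<le> 16 * s" using st by (rule le_trans)
      then have A0: "real ((d+2)*(d+2)) \<le> real (16 * s)" by (simp only: of_nat_le_iff)
      then have A: "(real d + 2) * (real d + 2) \<le> 16 * real s" by (simp add: algebra_simps)
      have "real n * real m \<le> ((real d + 2) * L) * ((real d + 2) * L)"
        by (rule mult_mono[OF nb(1) nb(2)]) (use Lp in simp_all)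
      also have "\<dots> = ((real d + 2) * (real d + 2)) * L^2" by (simp add: power2_eq_square)
      also have "\<dots> \<le> (16 * real s) * L^2" using A by (simp add: mult_right_mono)
      also have "\<dots> \<le> 1024 * L^2 * real s" by simp
      finally show ?thesis .
    qed
  qed
  have "0 < 2^10 * L^2" using Lp by simp
  then show ?thesis using goal by (simp add: divide_le_eq algebra_simps)
qed



lemma span_sub_span:
  fixes A B :: "'a::real_vector set"
  assumes "A \<subseteq> span B" shows "span A \<subseteq> span B"
  using assms by (simp add: span_minimal subspace_span)

theorem lemma17:
  "\<exists>d0::nat. \<forall>d\<ge>d0. \<forall>X Y :: (nat \<Rightarrow> real) set.
     X \<subseteq> Rd d \<and> Y \<subseteq> Rd d \<and> finite X \<and> finite Y \<and> X \<noteq> {} \<and>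
     (\<forall>C::real. real (card Y) = C * real (card X) \<longrightarrow> C \<le> ln (real (card X))) \<and>
     gen_aff_dim (sumset X Y) = int d \<and>
     (\<forall>K::real. real (card X) + real (card Y) = K * (real d + 2) \<longrightarrow> K \<le> ln (real (card X)))
     \<longrightarrow> real (card (sumset X Y)) \<ge> real (card X) * real (card Y) / (2^10 * (ln (real (card X)))^2)"
proof (intro exI[of _ 0] allI impI)
  fix d :: nat and X Y :: "(nat \<Rightarrow> real) set"
  assume H: "X \<subseteq> Rd d \<and> Y \<subseteq> Rd d \<and> finite X \<and> finite Y \<and> X \<noteq> {} \<and>
     (\<forall>C::real. real (card Y) = C * real (card X) \<longrightarrow> C \<le> ln (real (card X))) \<and>
     gen_aff_dim (sumset X Y) = int d \<and>
     (\<forall>K::real. real (card X) + real (card Y) = K * (real d + 2) \<longrightarrow> K \<le> ln (real (card X)))"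
  have fX: "finite X" and fY: "finite Y" and Xne: "X \<noteq> {}" and gd: "gen_aff_dim (sumset X Y) = int d"
    and HK: "\<forall>K::real. real (card X) + real (card Y) = K * (real d + 2) \<longrightarrow> K \<le> ln (real (card X))"
    using H by blast+
  let ?L = "ln (real (card X))"
  have nm: "real (card X) + real (card Y) \<le> (real d + 2) * ?L"
  proof -
    let ?K = "(real (card X) + real (card Y)) / (real d + 2)"
    have "real (card X) + real (card Y) = ?K * (real d + 2)" by simp
    then have "?K \<le> ?L" using HK by blast
    then show ?thesis by (simp add: divide_le_eq mult.commute)
  qed
  have n1: "card X \<ge> 1" using fX Xne by (simp add: Suc_le_eq card_gt_0_iff)
  obtain x0 y0 D where x0: "x0 \<in> X" and y0: "y0 \<in> Y" and indD: "independent D" and cD: "card D = d"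
    and DW: "D \<subseteq> span ((\<lambda>x. x - x0) ` X \<union> (\<lambda>y. y - y0) ` Y)"
    and WD: "(\<lambda>x. x - x0) ` X \<union> (\<lambda>y. y - y0) ` Y \<subseteq> span D" and fD: "finite D"
    using DIM[OF gd] by blast
  let ?X0 = "(\<lambda>x. x - x0) ` X" and ?Y0 = "(\<lambda>y. y - y0) ` Y"
  have fX0: "finite ?X0" and fY0: "finite ?Y0" using fX fY by simp_all
  have Scomm: "sumset Y X = sumset X Y" by (rule sumset_comm)
  obtain P where P: "P \<subseteq> ?X0" "independent P" "?X0 \<subseteq> span P"
    using maximal_independent_subset[of ?X0] by blast
  obtain Q where Q: "Q \<subseteq> ?Y0" "independent (P \<union> Q)" "P \<inter> Q = {}" "?Y0 \<subseteq> span (P \<union> Q)"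
    using E[OF P(1) P(2), of y0 Y] by blast
  have fP: "finite P" using P(1) fX0 finite_subset by blast
  have fQ: "finite Q" using Q(1) fY0 finite_subset by blast
  have "?X0 \<union> ?Y0 \<subseteq> span (P \<union> Q)"
    using P(3) Q(4) span_mono[of P "P \<union> Q"] by blast
  then have "D \<subseteq> span (P \<union> Q)" using DW span_sub_span by blast
  then have "card D \<le> card (P \<union> Q)" using independent_span_bound[OF _ indD] fP fQ by blast
  then have h1b: "d \<le> card P + card Q" using cD card_Un_disjoint[OF fP fQ Q(3)] by simp
  have h1a: "card X * (card Q + 1) \<le> card (sumset X Y)"
    by (rule I2[OF fX fY x0 y0 P(3) Q(1) Q(2) Q(3)])
  obtain Q' where Q': "Q' \<subseteq> ?Y0" "independent Q'" "?Y0 \<subseteq> span Q'"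
    using maximal_independent_subset[of ?Y0] by blast
  obtain P' where P': "P' \<subseteq> ?X0" "independent (Q' \<union> P')" "Q' \<inter> P' = {}" "?X0 \<subseteq> span (Q' \<union> P')"
    using E[OF Q'(1) Q'(2), of x0 X] by blast
  have fQ': "finite Q'" using Q'(1) fY0 finite_subset by blast
  have fP': "finite P'" using P'(1) fX0 finite_subset by blast
  have "?X0 \<union> ?Y0 \<subseteq> span (Q' \<union> P')"
    using Q'(3) P'(4) span_mono[of Q' "Q' \<union> P'"] by blast
  then have "D \<subseteq> span (Q' \<union> P')" using DW span_sub_span by blast
  then have "card D \<le> card (Q' \<union> P')" using independent_span_bound[OF _ indD] fP' fQ' by blast
  then have h2b: "d \<le> card Q' + card P'" using cD card_Un_disjoint[OF fQ' fP' P'(3)] by simp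
  have h2a: "card Y * (card P' + 1) \<le> card (sumset X Y)"
    using I2[OF fY fX y0 x0 Q'(3) P'(1) P'(2) P'(3)] Scomm by simp
  have bd: "card Q' \<le> d"
  proof -
    have "Q' \<subseteq> span D" using Q'(1) WD by blast
    then show ?thesis using independent_span_bound[OF fD Q'(2)] cD by simp
  qed
  have h3: "\<exists>q1. (card Q' div 2 + 1) * (q1 + 1) \<le> card (sumset X Y) \<and> card Q' \<le> card Q' div 2 + q1"
    if "d < 2 * card P" "d < 2 * card Q'"
  proof -
    have "card Q' div 2 \<le> card P" using bd that by linarith
    then obtain P1 where P1: "P1 \<subseteq> P" "card P1 = card Q' div 2" "finite P1"
      using obtain_subset_with_card_n by metis
    have iP1: "independent P1" using P(2) P1(1) independent_mono by blast
    have P1X: "P1 \<subseteq> ?X0" using P1(1) P(1) by blast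
    obtain Q1 where Q1: "Q1 \<subseteq> ?Y0" "independent (P1 \<union> Q1)" "P1 \<inter> Q1 = {}" "?Y0 \<subseteq> span (P1 \<union> Q1)"
      using E[OF P1X iP1, of y0 Y] by blast
    have fQ1: "finite Q1" using Q1(1) fY0 finite_subset by blast
    have "Q' \<subseteq> span (P1 \<union> Q1)" using Q'(1) Q1(4) by blast
    then have "card Q' \<le> card (P1 \<union> Q1)" using independent_span_bound[OF _ Q'(2)] P1(3) fQ1 by blast
    then have b: "card Q' \<le> card Q' div 2 + card Q1" using card_Un_disjoint[OF P1(3) fQ1 Q1(3)] P1(2) by simp
    have "(card P1 + 1) * (card Q1 + 1) \<le> card (sumset X Y)"
      by (rule I1[OF fX fY x0 y0 P1X Q1(1) Q1(2) Q1(3)])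
    then show ?thesis using b P1(2) by auto
  qed
  show "real (card (sumset X Y)) \<ge> real (card X) * real (card Y) / (2^10 * ?L^2)"
    using num[OF n1 refl nm h1a h1b h2a h2b h3] by simp
qed


end
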